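(* For every integer $n$ (with $q\neq 0$ if $n<0$), $$h_{n+1}^2-qh_n^2=d^2\left[\left(b^2-a^2q\right)u_{2n+1}-aq\left(2b-ap\right)u_{2n}\right].$$
   Context: Let $p,q,a,b$ be complex numbers and let $d=\sqrt{p^2-4q}$. The sequence $(u_n)$ is defined by $u_0=0$, $u_1=1$, $u_n=pu_{n-1}-qu_{n-2}$. The Horadam-Lucas sequence $(h_n)$ is defined by $h_0=2b-ap$, $h_1=bp-2aq$, $h_n=ph_{n-1}-qh_{n-2}$. When $q\neq0$, both are extended to negative indices by $x_{n-2}=(px_{n-1}-x_n)/q$. *)

theory Defs
  imports Complex_Main
begin

fun rec_pos :: "complex \<Rightarrow> complex \<Rightarrow> complex \<Rightarrow> complex \<Rightarrow> nat \<Rightarrow> complex" where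
  "rec_pos p q x0 x1 0 = x0"
| "rec_pos p q x0 x1 (Suc 0) = x1"
| "rec_pos p q x0 x1 (Suc (Suc n)) = p * rec_pos p q x0 x1 (Suc n) - q * rec_pos p q x0 x1 n"

text \<open>Backward extension: rec_neg ... n = x_(-n), via x_(m-2) = (p x_(m-1) - x_m)/q.\<close>
fun rec_neg :: "complex \<Rightarrow> complex \<Rightarrow> complex \<Rightarrow> complex \<Rightarrow> nat \<Rightarrow> complex" where
  "rec_neg p q x0 x1 0 = x0"
| "rec_neg p q x0 x1 (Suc 0) = (p * x0 - x1) / q"
| "rec_neg p q x0 x1 (Suc (Suc n)) = (p * rec_neg p q x0 x1 (Suc n) - rec_neg p q x0 x1 n) / q"

definition rec_seq :: "complex \<Rightarrow> complex \<Rightarrow> complex \<Rightarrow> complex \<Rightarrow> int \<Rightarrow> complex" where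
  "rec_seq p q x0 x1 n = (if n \<ge> 0 then rec_pos p q x0 x1 (nat n) else rec_neg p q x0 x1 (nat (- n)))"

definition useq :: "complex \<Rightarrow> complex \<Rightarrow> int \<Rightarrow> complex" where
  "useq p q = rec_seq p q 0 1"

definition hseq :: "complex \<Rightarrow> complex \<Rightarrow> complex \<Rightarrow> complex \<Rightarrow> int \<Rightarrow> complex" where
  "hseq p q a b = rec_seq p q (2 * b - a * p) (b * p - 2 * a * q)"

definition dd :: "complex \<Rightarrow> complex \<Rightarrow> complex" where
  "dd p q = csqrt (p\<^sup>2 - 4 * q)"

end

theory Submission
  imports Defs
begin

lemma rs_rec:
  assumes "n \<ge> 0 \<or> q \<noteq> 0"
  shows "rec_seq p q x0 x1 (n + 2) = p * rec_seq p q x0 x1 (n + 1) - q * rec_seq p q x0 x1 n"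
proof (cases "n \<ge> 0")
  case True
  then obtain m where m: "n = int m" by (metis nonneg_eq_int)
  have "nat (int m + 2) = Suc (Suc m)" "nat (int m + 1) = Suc m" by auto
  then show ?thesis unfolding rec_seq_def m by simp
next
  case False
  hence q: "q \<noteq> 0" using assms by auto
  show ?thesis
  proof (cases "n = -1")
    case True
    have e: "rec_seq p q x0 x1 (n+2) = x1" "rec_seq p q x0 x1 (n+1) = x0"
       "rec_seq p q x0 x1 n = (p * x0 - x1) / q" using True by (auto simp: rec_seq_def)
    show ?thesis unfolding e using q by simp
  next
    case False
    with \<open>\<not> n \<ge> 0\<close> have "n = - int (nat (-n-2)) - 2" by simp
    then obtain m where m: "n = - int m - 2" by blast
    then show ?thesis
    proof (cases m)
      case 0
      have e: "rec_seq p q x0 x1 (n+2) = x0" "rec_seq p q x0 x1 (n+1) = (p * x0 - x1) / q"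
       "rec_seq p q x0 x1 n = (p * ((p * x0 - x1) / q) - x0) / q" using m 0
        by (auto simp: rec_seq_def numeral_2_eq_2)
      show ?thesis unfolding e using q by simp
    next
      case (Suc k)
      have a: "nat (- n) = Suc (Suc (Suc k))" "nat (-(n+1)) = Suc (Suc k)" "nat (-(n+2)) = Suc k"
        using m Suc by auto
      have b: "\<not> 0 \<le> n" "\<not> 0 \<le> n + 1" "\<not> 0 \<le> n + 2" using m Suc by auto
      have e: "rec_seq p q x0 x1 (n+2) = rec_neg p q x0 x1 (Suc k)"
         "rec_seq p q x0 x1 (n+1) = rec_neg p q x0 x1 (Suc (Suc k))"
         "rec_seq p q x0 x1 n = rec_neg p q x0 x1 (Suc (Suc (Suc k)))"
        unfolding rec_seq_def using a b by (simp_all only: if_False)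
      have f: "rec_neg p q x0 x1 (Suc (Suc (Suc k))) = (p * rec_neg p q x0 x1 (Suc (Suc k)) - rec_neg p q x0 x1 (Suc k)) / q"
        by (rule rec_neg.simps(3))
      show ?thesis unfolding e f using q by simp
    qed
  qed
qed

lemma alg:
  fixes p q h0 h1 h2 h3 u0 u1 u2 u3 u4 u5 B C D :: complex
  assumes "h2 = p*h1 - q*h0" "h3 = p*h2 - q*h1" "u2 = p*u1 - q*u0" "u3 = p*u2 - q*u1"
    "u4 = p*u3 - q*u2" "u5 = p*u4 - q*u3"
  shows "h3\<^sup>2 - q*h2\<^sup>2 - D*(B*u5 - C*u4) = (p\<^sup>2-2*q)*(h2\<^sup>2 - q*h1\<^sup>2 - D*(B*u3 - C*u2))
     - q\<^sup>2*(h1\<^sup>2 - q*h0\<^sup>2 - D*(B*u1 - C*u0))"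
  unfolding assms by (simp add: algebra_simps power2_eq_square)

definition SS :: "complex \<Rightarrow> complex \<Rightarrow> complex \<Rightarrow> complex \<Rightarrow> int \<Rightarrow> complex" where
  "SS p q a b n = (hseq p q a b (n + 1))\<^sup>2 - q * (hseq p q a b n)\<^sup>2 -
         (p\<^sup>2 - 4*q) * ((b\<^sup>2 - a\<^sup>2 * q) * useq p q (2 * n + 1)
                         - a * q * (2 * b - a * p) * useq p q (2 * n))"

lemma SS_rec:
  assumes "n \<ge> 0 \<or> q \<noteq> 0"
  shows "SS p q a b (n+2) = (p\<^sup>2-2*q) * SS p q a b (n+1) - q\<^sup>2 * SS p q a b n"
proof -
  let ?H = "hseq p q a b" and ?U = "useq p q"
  have c1: "n+1 \<ge> 0 \<or> q \<noteq> 0" "2*n \<ge> 0 \<or> q \<noteq> 0" "2*n+1 \<ge> 0 \<or> q \<noteq> 0"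
    "2*n+2 \<ge> 0 \<or> q \<noteq> 0" "2*n+3 \<ge> 0 \<or> q \<noteq> 0" using assms by auto
  have h2: "?H (n+2) = p * ?H (n+1) - q * ?H n" using rs_rec[OF assms] by (simp add: hseq_def)
  have h3: "?H (n+3) = p * ?H (n+2) - q * ?H (n+1)" using rs_rec[OF c1(1)] by (simp add: hseq_def add.assoc)
  have u2: "?U (2*n+2) = p * ?U (2*n+1) - q * ?U (2*n)" using rs_rec[OF c1(2)] by (simp add: useq_def)
  have u3: "?U (2*n+3) = p * ?U (2*n+2) - q * ?U (2*n+1)" using rs_rec[OF c1(3)] by (simp add: useq_def add.assoc)
  have u4: "?U (2*n+4) = p * ?U (2*n+3) - q * ?U (2*n+2)" using rs_rec[OF c1(4)] by (simp add: useq_def add.assoc)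
  have u5: "?U (2*n+5) = p * ?U (2*n+4) - q * ?U (2*n+3)" using rs_rec[OF c1(5)] by (simp add: useq_def add.assoc)
  have i: "n+2+1 = n+3" "2*(n+2)+1 = 2*n+5" "2*(n+2) = 2*n+4" "n+1+1 = n+2" "2*(n+1)+1 = 2*n+3" "2*(n+1) = 2*n+2" "2*n+4+1 = 2*n+5" "2*n+2+1 = 2*n+3"
    by auto
  show ?thesis unfolding SS_def i
    by (rule alg[OF h2 h3 u2 u3 u4 u5])
qed

lemma SS_base: "SS p q a b 0 = 0" "SS p q a b 1 = 0"
proof -
  have r: "rec_seq p q x0 x1 0 = x0" "rec_seq p q x0 x1 1 = x1"
    "rec_seq p q x0 x1 2 = p*x1 - q*x0" "rec_seq p q x0 x1 3 = p*(p*x1 - q*x0) - q*x1" for x0 x1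
    by (simp_all add: rec_seq_def numeral_2_eq_2 numeral_3_eq_3)
  show "SS p q a b 0 = 0" unfolding SS_def hseq_def useq_def by (simp add: r) algebra
  show "SS p q a b 1 = 0" unfolding SS_def hseq_def useq_def using r[of 0 1]
    by (simp add: r) algebra
qed

lemma SS_nat: "SS p q a b (int m) = 0 \<and> SS p q a b (int m + 1) = 0"
proof (induction m)
  case 0 then show ?case using SS_base by simp
next
  case (Suc m)
  have "SS p q a b (int m + 2) = 0" using SS_rec[of "int m" q p a b] Suc by simp
  moreover have "int (Suc m) = int m + 1" "int (Suc m) + 1 = int m + 2" by auto
  ultimately show ?case using Suc by metis
qed

lemma SS_neg: assumes "q \<noteq> 0" shows "SS p q a b (- int m) = 0 \<and> SS p q a b (- int m + 1) = 0"
proof (induction m)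
  case 0 then show ?case using SS_base by simp
next
  case (Suc m)
  have e: "- int (Suc m) + 2 = - int m + 1" "- int (Suc m) + 1 = - int m" by auto
  have "q\<^sup>2 * SS p q a b (- int (Suc m)) = 0"
    using SS_rec[of "- int (Suc m)" q p a b] Suc assms unfolding e by simp
  then show ?case using Suc assms e by simp
qed

theorem mainTheorem8:
  fixes p q a b :: complex and n :: int
  assumes "n < 0 \<longrightarrow> q \<noteq> 0"
  shows "(hseq p q a b (n + 1))\<^sup>2 - q * (hseq p q a b n)\<^sup>2 =
         (dd p q)\<^sup>2 * ((b\<^sup>2 - a\<^sup>2 * q) * useq p q (2 * n + 1)
                         - a * q * (2 * b - a * p) * useq p q (2 * n))"
proof -
  have "SS p q a b n = 0"
  proof (cases "n \<ge> 0")
    case True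
    then show ?thesis using SS_nat[where m="nat n"] by simp
  next
    case False
    then show ?thesis using SS_neg[where m="nat (-n)"] assms by simp
  qed
  then show ?thesis unfolding SS_def dd_def by simp
qed

end
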